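(* Let $F$, $H$, $X$, $\Omega$, $Q$ and the sequences generated by the IneIREG method be as described in the context. Let $\varepsilon>0$ be a tolerance and $\mathcal D_0>0$ satisfy $\mathcal D_0\ge \overline\lambda C_HD_X/\underline\lambda$, and suppose $\eta_k\equiv\eta:=\varepsilon/(2\mathcal D_0)$ for all $k\ge0$; $\alpha_0\in[0,1]$ and $(\alpha_k)$ is nonincreasing; $\lambda_k\in[\underline\lambda,\overline\lambda]$ for all $k$ with $0<\underline\lambda\le\overline\lambda\le1/(L_F+\eta L_H)$; and $\hat s:=\sum_{k=0}^\infty\delta_k<+\infty$. For $k\ge1$ let $\Lambda_k=\sum_{j=0}^{k-1}\lambda_j$ and $\overline y_k=\Lambda_k^{-1}\sum_{j=0}^{k-1}\lambda_jy_j$. Then for all $$k\ge\max\Big\{\Big\lceil\frac{1}{\varepsilon^2}\Big(\frac{\mathcal D_0(D_X^2+\hat s)}{\underline\lambda}\Big)\Big\rceil,\ \Big\lceil\frac1\varepsilon\Big(\frac{D_X^2+\hat s}{\underline\lambda}\Big)\Big\rceil\Big\}$$ we have $-B_H\,\mathrm{dist}(\overline y_k,Q)\le\mathrm{Gap}(\overline y_k,H,Q)\le\varepsilon$ and $0\le\mathrm{Gap}(\overline y_k,F,X)\le\varepsilon$. Moreover, if $Q$ is $\sigma$-weakly sharp of order $\mathcal M\ge1$, then for such $k$, $\mathrm{Gap}(\overline y_k,H,Q)\ge-\big(B_H/\sigma^{1/\mathcal M}\big)\varepsilon^{1/\mathcal M}$.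
   Context: Work in $\mathbb{R}^n$ with Euclidean inner product $\langle\cdot,\cdot\rangle$ and norm $\|\cdot\|$. The maps $F\colon \mathrm{Dom}\,F\to\mathbb{R}^n$ and $H\colon\mathrm{Dom}\,H\to\mathbb{R}^n$ are monotone and Lipschitz continuous with constants $L_F>0$ and $L_H>0$. $X$ is a nonempty compact convex set and $\Omega$ a nonempty closed convex set with $X\subset\Omega\subset\mathrm{Dom}\,F\cap\mathrm{Dom}\,H$; $P_X,P_\Omega$ denote orthogonal projections. $Q:=\{x\in X:\langle F(x),y-x\rangle\ge0\ \forall y\in X\}$ is assumed nonempty. $D_X:=\sup_{x,y\in X}\|x-y\|$, $C_H:=\sup_{x\in X}\|H(x)\|$, $B_H:=\sup_{x\in Q}\|H(x)\|$, $\mathrm{dist}(y,Q)$ is the Euclidean distance to $Q$. $\mathrm{Gap}(z,H,Q):=\sup_{x\in Q}\langle H(x),z-x\rangle$, $\mathrm{Gap}(z,F,X):=\sup_{x\in X}\langle F(x),z-x\rangle$. $Q$ is $\sigma$-weakly sharp of order $\mathcal M\ge1$ ($\sigma>0$) if $\langle F(x),y-x\rangle\ge\sigma\,\mathrm{dist}(y,Q)^{\mathcal M}$ for all $x\in Q$, $y\in X$. IneIREG method: start with $x_0=x_{-1}\in X$; for $k=0,1,\dots$, with parameters $\alpha_k\ge0$, $\lambda_k>0$, $\eta_k>0$, set $w_k=x_k+\alpha_k(x_k-x_{k-1})$, $w'_k=P_\Omega(w_k)$, $y_k=P_X\big(w_k-\lambda_k(F(w'_k)+\eta_kH(w'_k))\big)$,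 $x_{k+1}=P_X\big(w_k-\lambda_k(F(y_k)+\eta_kH(y_k))\big)$. Also $\delta_k:=\alpha_k(1+\alpha_k)\|x_k-x_{k-1}\|^2$ for $k\ge0$. *)

theory Defs
  imports "HOL-Analysis.Analysis"
begin

definition monotone_op :: "('a::real_inner \<Rightarrow> 'a) \<Rightarrow> 'a set \<Rightarrow> bool" where
  "monotone_op F D \<longleftrightarrow> (\<forall>x\<in>D. \<forall>y\<in>D. (F x - F y) \<bullet> (x - y) \<ge> 0)"

definition VI_sol :: "('a::real_inner \<Rightarrow> 'a) \<Rightarrow> 'a set \<Rightarrow> 'a set" where
  "VI_sol F X = {x \<in> X. \<forall>y\<in>X. F x \<bullet> (y - x) \<ge> 0}"

definition Gap :: "'a::real_inner \<Rightarrow> ('a \<Rightarrow> 'a) \<Rightarrow> 'a set \<Rightarrow> real" where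
  "Gap z G S = (SUP x\<in>S. G x \<bullet> (z - x))"

definition weakly_sharp :: "('a::real_inner \<Rightarrow> 'a) \<Rightarrow> 'a set \<Rightarrow> 'a set \<Rightarrow> real \<Rightarrow> real \<Rightarrow> bool" where
  "weakly_sharp F X Q \<sigma> M \<longleftrightarrow>
     (\<forall>x\<in>Q. \<forall>y\<in>X. F x \<bullet> (y - x) \<ge> \<sigma> * (infdist y Q) powr M)"

end

theory Submission
  imports Defs
begin

lemma eg_alg:
  fixes w y xp u gy gw :: "'a::real_inner"
  assumes p1: "(w - lam *\<^sub>R gy - xp) \<bullet> (u - xp) \<le> 0"
    and p2: "(w - lam *\<^sub>R gw - y) \<bullet> (xp - y) \<le> 0"
    and key: "2 * lam * ((gw - gy) \<bullet> (xp - y)) \<le> (norm (w - y))\<^sup>2 + (norm (xp - y))\<^sup>2"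
  shows "(norm (xp - u))\<^sup>2 \<le> (norm (w - u))\<^sup>2 - 2 * lam * (gy \<bullet> (y - u))"
  using p1 p2 key
  by (simp add: power2_norm_eq_inner inner_diff_left inner_diff_right inner_commute algebra_simps)

lemma eg_step:
  fixes G :: "'a::euclidean_space \<Rightarrow> 'a"
  assumes Xc: "closed X" "convex X" "X \<noteq> {}"
    and Oc: "closed \<Omega>" "convex \<Omega>" "\<Omega> \<noteq> {}" and XO: "X \<subseteq> \<Omega>"
    and Lip: "\<And>a b. a \<in> \<Omega> \<Longrightarrow> b \<in> \<Omega> \<Longrightarrow> norm (G a - G b) \<le> L * norm (a - b)"
    and lam: "lam > 0" "lam * L \<le> 1" and L: "L \<ge> 0" and u: "u \<in> X"
    and y: "y = closest_point X (w - lam *\<^sub>R G (closest_point \<Omega> w))"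
    and xp: "xp = closest_point X (w - lam *\<^sub>R G y)"
  shows "(norm (xp - u))\<^sup>2 \<le> (norm (w - u))\<^sup>2 - 2 * lam * (G y \<bullet> (y - u))"
proof -
  define w' where "w' = closest_point \<Omega> w"
  have yX: "y \<in> X" using y Xc closest_point_in_set by metis
  have xpX: "xp \<in> X" using xp Xc closest_point_in_set by metis
  have w'O: "w' \<in> \<Omega>" using w'_def Oc closest_point_in_set by metis
  have yO: "y \<in> \<Omega>" using yX XO by auto
  have p1: "(w - lam *\<^sub>R G y - xp) \<bullet> (u - xp) \<le> 0"
    unfolding xp by (rule closest_point_dot[OF Xc(2,1) u])
  have p2: "(w - lam *\<^sub>R G w' - y) \<bullet> (xp - y) \<le> 0"
    using closest_point_dot[OF Xc(2,1) xpX, of "w - lam *\<^sub>R G w'"] y w'_def by simp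
  have "norm (w' - y) \<le> norm (w - y)"
    using closest_point_lipschitz[OF Oc(2,1,3), of w y] closest_point_self[OF yO]
    by (simp add: w'_def dist_norm)
  hence g: "norm (G w' - G y) \<le> L * norm (w - y)"
    using Lip[OF w'O yO] L by (meson mult_left_mono order_trans)
  have "2 * lam * ((G w' - G y) \<bullet> (xp - y)) \<le> 2 * lam * (norm (G w' - G y) * norm (xp - y))"
    using lam norm_cauchy_schwarz[of "G w' - G y" "xp - y"] by (intro mult_left_mono) auto
  also have "\<dots> \<le> 2 * lam * (L * norm (w - y) * norm (xp - y))"
    using lam g by (intro mult_left_mono mult_right_mono) auto
  also have "\<dots> = 2 * (lam * L) * (norm (w - y) * norm (xp - y))" by simp
  also have "\<dots> \<le> 2 * 1 * (norm (w - y) * norm (xp - y))"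
    using lam by (intro mult_left_mono mult_right_mono) auto
  also have "\<dots> \<le> (norm (w - y))\<^sup>2 + (norm (xp - y))\<^sup>2"
    using sum_squares_bound[of "norm (w-y)" "norm (xp-y)"] by (simp add: power2_eq_square)
  finally show ?thesis by (intro eg_alg[OF p1 p2]) 
qed

lemma inert:
  fixes a b u :: "'a::real_inner"
  shows "(norm (a + t *\<^sub>R (a - b) - u))\<^sup>2 = (1+t)*(norm(a-u))\<^sup>2 - t*(norm(b-u))\<^sup>2 + t*(1+t)*(norm(a-b))\<^sup>2"
  by (simp add: power2_norm_eq_inner inner_diff_left inner_diff_right inner_add_left inner_add_right inner_commute algebra_simps)

lemma telesc:
  fixes \<phi> \<alpha> \<delta> c :: "nat \<Rightarrow> real"
  assumes st: "\<And>k. \<phi> (Suc k) \<le> (1 + \<alpha> k) * \<phi> k - \<alpha> k * \<phi> (k - 1) + \<delta> k - c k"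
    and dec: "decseq \<alpha>" and phi: "\<And>k. \<phi> k \<le> D2"
  shows "\<phi> K - \<alpha> K * \<phi> (K - 1) + (\<Sum>j<K. c j) \<le> \<phi> 0 - \<alpha> 0 * \<phi> 0 + (\<alpha> 0 - \<alpha> K) * D2 + (\<Sum>j<K. \<delta> j)"
proof (induction K)
  case 0
  then show ?case by simp
next
  case (Suc K)
  have "\<alpha> (Suc K) \<le> \<alpha> K" using dec by (simp add: decseq_Suc_iff)
  hence "(\<alpha> K - \<alpha> (Suc K)) * \<phi> K \<le> (\<alpha> K - \<alpha> (Suc K)) * D2" using phi by (intro mult_left_mono) auto
  moreover have "(1 + \<alpha> K) * \<phi> K = \<phi> K + \<alpha> K * \<phi> K" by algebra
  moreover have "(\<alpha> K - \<alpha> (Suc K)) * \<phi> K = \<alpha> K * \<phi> K - \<alpha> (Suc K) * \<phi> K" by algebra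
  moreover have "(\<alpha> 0 - \<alpha> (Suc K)) * D2 = (\<alpha> 0 - \<alpha> K) * D2 + (\<alpha> K - \<alpha> (Suc K)) * D2" by algebra
  ultimately show ?case using Suc st[of K] by simp
qed

lemma avg:
  fixes lam :: "nat \<Rightarrow> real" and y :: "nat \<Rightarrow> 'a::real_inner"
  assumes "(\<Sum>j<K. lam j) \<noteq> 0"
  shows "(\<Sum>j<K. lam j * (g \<bullet> (y j - u))) = (\<Sum>j<K. lam j) * (g \<bullet> ((1 / (\<Sum>j<K. lam j)) *\<^sub>R (\<Sum>j<K. lam j *\<^sub>R y j) - u))"
proof -
  define L where "L = (\<Sum>j<K. lam j)"
  have L0: "L \<noteq> 0" using assms L_def by simp
  have "g \<bullet> ((1 / L) *\<^sub>R (\<Sum>j<K. lam j *\<^sub>R y j) - u) = (1/L) * (\<Sum>j<K. lam j * (g \<bullet> y j)) - g \<bullet> u"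
    by (simp add: inner_diff_right inner_sum_right)
  hence "L * (g \<bullet> ((1 / L) *\<^sub>R (\<Sum>j<K. lam j *\<^sub>R y j) - u)) = (\<Sum>j<K. lam j * (g \<bullet> y j)) - L * (g \<bullet> u)"
    using L0 by (simp add: right_diff_distrib)
  moreover have "(\<Sum>j<K. lam j * (g \<bullet> (y j - u))) = (\<Sum>j<K. lam j * (g \<bullet> y j)) - L * (g \<bullet> u)"
    unfolding L_def by (simp add: inner_diff_right right_diff_distrib sum_subtractf sum_distrib_right)
  ultimately show ?thesis unfolding L_def by simp
qed

lemma Gap_le:
  assumes "S \<noteq> {}" "\<And>x. x \<in> S \<Longrightarrow> G x \<bullet> (z - x) \<le> c"
  shows "Gap z G S \<le> c"
  unfolding Gap_def using assms by (intro cSUP_least) auto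

lemma Gap_ge:
  assumes "x \<in> S" "\<And>x. x \<in> S \<Longrightarrow> G x \<bullet> (z - x) \<le> c"
  shows "G x \<bullet> (z - x) \<le> Gap z G S"
  unfolding Gap_def using assms by (intro cSUP_upper bdd_aboveI2) auto

theorem theorem3p13:
  fixes F H :: "real^'n \<Rightarrow> real^'n"
    and DomF DomH X \<Omega> :: "(real^'n) set"
    and L_F L_H \<epsilon> D0 lam_lo lam_hi :: real
    and x y w w' :: "nat \<Rightarrow> real^'n"
    and \<alpha> lam :: "nat \<Rightarrow> real"
  defines "Q \<equiv> VI_sol F X"
    and "D_X \<equiv> diameter X"
    and "C_H \<equiv> (SUP z\<in>X. norm (H z))"
    and "B_H \<equiv> (SUP z\<in>VI_sol F X. norm (H z))"
    and "\<eta> \<equiv> \<epsilon> / (2 * D0)"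
    and "\<delta> \<equiv> (\<lambda>k. \<alpha> k * (1 + \<alpha> k) * (norm (x k - x (k - 1)))\<^sup>2)"
    and "ybar \<equiv> (\<lambda>k. (1 / (\<Sum>j<k. lam j)) *\<^sub>R (\<Sum>j<k. lam j *\<^sub>R y j))"
  assumes F_mono: "monotone_op F DomF" and H_mono: "monotone_op H DomH"
    and L_F_pos: "L_F > 0" and L_H_pos: "L_H > 0"
    and F_lip: "L_F-lipschitz_on DomF F" and H_lip: "L_H-lipschitz_on DomH H"
    and X_ne: "X \<noteq> {}" and X_compact: "compact X" and X_convex: "convex X"
    and \<Omega>_ne: "\<Omega> \<noteq> {}" and \<Omega>_closed: "closed \<Omega>" and \<Omega>_convex: "convex \<Omega>"
    and X_sub: "X \<subseteq> \<Omega>" and \<Omega>_sub: "\<Omega> \<subseteq> DomF \<inter> DomH"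
    and Q_ne: "VI_sol F X \<noteq> {}"
    and eps_pos: "\<epsilon> > 0"
    and D0_pos: "D0 > 0" and D0_ge: "D0 \<ge> lam_hi * C_H * D_X / lam_lo"
    and alpha_nonneg: "\<And>k. \<alpha> k \<ge> 0" and alpha0: "\<alpha> 0 \<le> 1"
    and alpha_noninc: "decseq \<alpha>"
    and lam_bounds: "\<And>k. lam_lo \<le> lam k \<and> lam k \<le> lam_hi"
    and lam_lo_pos: "0 < lam_lo" and lam_lo_hi: "lam_lo \<le> lam_hi"
    and lam_hi_le: "lam_hi \<le> 1 / (L_F + \<eta> * L_H)"
    and x0: "x 0 \<in> X"
    and w_def: "\<And>k. w k = x k + \<alpha> k *\<^sub>R (x k - x (k - 1))"
    and w'_def: "\<And>k. w' k = closest_point \<Omega> (w k)"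
    and y_def: "\<And>k. y k = closest_point X (w k - lam k *\<^sub>R (F (w' k) + \<eta> *\<^sub>R H (w' k)))"
    and x_def: "\<And>k. x (Suc k) = closest_point X (w k - lam k *\<^sub>R (F (y k) + \<eta> *\<^sub>R H (y k)))"
    and delta_summable: "summable \<delta>"
  shows "\<forall>k. k \<ge> 1 \<and>
           int k \<ge> max \<lceil>(1 / \<epsilon>\<^sup>2) * (D0 * (D_X\<^sup>2 + suminf \<delta>) / lam_lo)\<rceil>
                       \<lceil>(1 / \<epsilon>) * ((D_X\<^sup>2 + suminf \<delta>) / lam_lo)\<rceil> \<longrightarrow>
           (- B_H * infdist (ybar k) Q \<le> Gap (ybar k) H Q \<and> Gap (ybar k) H Q \<le> \<epsilon> \<and>
            0 \<le> Gap (ybar k) F X \<and> Gap (ybar k) F X \<le> \<epsilon> \<and>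
            (\<forall>\<sigma> M. \<sigma> > 0 \<and> M \<ge> 1 \<and> weakly_sharp F X Q \<sigma> M \<longrightarrow>
               Gap (ybar k) H Q \<ge> - (B_H / \<sigma> powr (1 / M)) * \<epsilon> powr (1 / M)))"
proof -
  define G where "G = (\<lambda>z. F z + \<eta> *\<^sub>R H z)"
  define L where "L = L_F + \<eta> * L_H"
  define S where "S = D_X\<^sup>2 + suminf \<delta>"
  have Qd: "Q = VI_sol F X" using Q_def by simp
  have eta_pos: "\<eta> > 0" unfolding \<eta>_def using eps_pos D0_pos by simp
  have L_pos: "L > 0" unfolding L_def using L_F_pos L_H_pos eta_pos by (simp add: add_pos_pos)
  have XD: "X \<subseteq> DomF" "X \<subseteq> DomH" "\<Omega> \<subseteq> DomF" "\<Omega> \<subseteq> DomH" using X_sub \<Omega>_sub by auto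
  have X_closed: "closed X" using X_compact compact_imp_closed by auto
  have X_bdd: "bounded X" using X_compact compact_imp_bounded by auto
  have diam: "\<And>a b. a \<in> X \<Longrightarrow> b \<in> X \<Longrightarrow> norm (a - b) \<le> D_X"
    unfolding D_X_def using diameter_bounded_bound[OF X_bdd] by (metis dist_norm)
  have DX_nn: "D_X \<ge> 0" using diam X_ne by (meson ex_in_conv norm_ge_zero order_trans)
  have H_cont: "continuous_on X H"
    using lipschitz_on_continuous_on[OF H_lip] XD continuous_on_subset by blast
  have F_cont: "continuous_on X F"
    using lipschitz_on_continuous_on[OF F_lip] XD continuous_on_subset by blast
  obtain MH where MH: "\<And>z. z \<in> X \<Longrightarrow> norm (H z) \<le> MH"
    using compact_imp_bounded[OF compact_continuous_image[OF H_cont X_compact]]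
    unfolding bounded_iff by auto
  have CH: "\<And>z. z \<in> X \<Longrightarrow> norm (H z) \<le> C_H"
    unfolding C_H_def using MH by (intro cSUP_upper bdd_aboveI2) auto
  have CH_nn: "C_H \<ge> 0" using CH X_ne by (meson ex_in_conv norm_ge_zero order_trans)
  have QX: "Q \<subseteq> X" unfolding Qd VI_sol_def by auto
  have Q_ne': "Q \<noteq> {}" using Q_ne Qd by simp
  have BH: "\<And>z. z \<in> Q \<Longrightarrow> norm (H z) \<le> B_H"
    unfolding B_H_def Qd[symmetric] using MH QX by (intro cSUP_upper bdd_aboveI2) auto
  have BH_nn: "B_H \<ge> 0" using BH Q_ne' by (meson ex_in_conv norm_ge_zero order_trans)
  have Glip: "\<And>a b. a \<in> \<Omega> \<Longrightarrow> b \<in> \<Omega> \<Longrightarrow> norm (G a - G b) \<le> L * norm (a - b)"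
  proof -
    fix a b assume a: "a \<in> \<Omega>" and b: "b \<in> \<Omega>"
    have f: "norm (F a - F b) \<le> L_F * norm (a - b)"
      using lipschitz_onD[OF F_lip] a b XD by (metis dist_norm subsetD)
    have h: "norm (H a - H b) \<le> L_H * norm (a - b)"
      using lipschitz_onD[OF H_lip] a b XD by (metis dist_norm subsetD)
    have "G a - G b = (F a - F b) + \<eta> *\<^sub>R (H a - H b)"
      unfolding G_def by (simp add: algebra_simps)
    hence "norm (G a - G b) \<le> norm (F a - F b) + \<eta> * norm (H a - H b)"
      using norm_triangle_ineq[of "F a - F b" "\<eta> *\<^sub>R (H a - H b)"] eta_pos by simp
    also have "\<dots> \<le> L_F * norm (a - b) + \<eta> * (L_H * norm (a - b))"
      using f h eta_pos by (intro add_mono mult_left_mono) auto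
    also have "\<dots> = L * norm (a - b)" unfolding L_def by (simp add: algebra_simps)
    finally show "norm (G a - G b) \<le> L * norm (a - b)" .
  qed
  have lam_pos: "\<And>k. lam k > 0" using lam_bounds lam_lo_pos by (meson less_le_trans)
  have lamL: "\<And>k. lam k * L \<le> 1"
  proof -
    fix k
    have "lam k \<le> 1 / L" using lam_bounds[of k] lam_hi_le unfolding L_def by linarith
    thus "lam k * L \<le> 1" using L_pos by (simp add: le_divide_eq)
  qed
  have xX: "\<And>k. x k \<in> X"
  proof -
    fix k show "x k \<in> X"
      by (cases k) (auto simp: x0 x_def intro!: closest_point_in_set[OF X_closed X_ne])
  qed
  have yX: "\<And>k. y k \<in> X"
    unfolding y_def by (intro closest_point_in_set[OF X_closed X_ne])
  have step: "\<And>k u. u \<in> X \<Longrightarrow> (norm (x (Suc k) - u))\<^sup>2 \<le> (norm (w k - u))\<^sup>2 - 2 * lam k * (G (y k) \<bullet> (y k - u))"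
  proof -
    fix k u assume u: "u \<in> X"
    show "(norm (x (Suc k) - u))\<^sup>2 \<le> (norm (w k - u))\<^sup>2 - 2 * lam k * (G (y k) \<bullet> (y k - u))"
      by (rule eg_step[OF X_closed X_convex X_ne \<Omega>_closed \<Omega>_convex \<Omega>_ne X_sub Glip lam_pos lamL
            less_imp_le[OF L_pos] u]) (auto simp: y_def x_def w'_def G_def)
  qed
  have mono: "\<And>u v. u \<in> X \<Longrightarrow> v \<in> X \<Longrightarrow> G u \<bullet> (v - u) \<le> G v \<bullet> (v - u)"
  proof -
    fix u v assume u: "u \<in> X" and v: "v \<in> X"
    have f: "(F v - F u) \<bullet> (v - u) \<ge> 0" using F_mono u v XD unfolding monotone_op_def by blast
    have h: "(H v - H u) \<bullet> (v - u) \<ge> 0" using H_mono u v XD unfolding monotone_op_def by blast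
    have "(G v - G u) \<bullet> (v - u) = (F v - F u) \<bullet> (v - u) + \<eta> * ((H v - H u) \<bullet> (v - u))"
      unfolding G_def by (simp add: inner_diff_left inner_add_left algebra_simps)
    also have "\<dots> \<ge> 0" using f h eta_pos by simp
    finally show "G u \<bullet> (v - u) \<le> G v \<bullet> (v - u)" by (simp add: inner_diff_left)
  qed
  have delta_nn: "\<And>k. \<delta> k \<ge> 0" unfolding \<delta>_def using alpha_nonneg by simp
  have partial: "\<And>K. (\<Sum>j<K. \<delta> j) \<le> suminf \<delta>"
    using sum_le_suminf[OF delta_summable] delta_nn by blast
  have S_nn: "S \<ge> 0" unfolding S_def using suminf_nonneg[OF delta_summable] delta_nn by simp
  have key: "\<And>u K. u \<in> X \<Longrightarrow> 2 * (\<Sum>j<K. lam j * (G (y j) \<bullet> (y j - u))) \<le> S"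
  proof -
    fix u K assume u: "u \<in> X"
    define \<phi> where "\<phi> = (\<lambda>j. (norm (x j - u))\<^sup>2)"
    define c where "c = (\<lambda>j. 2 * lam j * (G (y j) \<bullet> (y j - u)))"
    have st: "\<And>k. \<phi> (Suc k) \<le> (1 + \<alpha> k) * \<phi> k - \<alpha> k * \<phi> (k - 1) + \<delta> k - c k"
    proof -
      fix k
      have "(norm (w k - u))\<^sup>2 = (1 + \<alpha> k) * \<phi> k - \<alpha> k * \<phi> (k - 1) + \<delta> k"
        unfolding w_def \<phi>_def \<delta>_def by (rule inert)
      thus "\<phi> (Suc k) \<le> (1 + \<alpha> k) * \<phi> k - \<alpha> k * \<phi> (k - 1) + \<delta> k - c k"
        using step[OF u, of k] unfolding \<phi>_def c_def by simp
    qed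
    have phiD: "\<And>k. \<phi> k \<le> D_X\<^sup>2" unfolding \<phi>_def
      using diam[OF xX u] by (intro power_mono) auto
    have phi_nn: "\<And>k. \<phi> k \<ge> 0" unfolding \<phi>_def by simp
    have tel: "\<phi> K - \<alpha> K * \<phi> (K - 1) + (\<Sum>j<K. c j) \<le> \<phi> 0 - \<alpha> 0 * \<phi> 0 + (\<alpha> 0 - \<alpha> K) * D_X\<^sup>2 + (\<Sum>j<K. \<delta> j)"
      by (rule telesc[OF st alpha_noninc phiD])
    have f1: "(1 - \<alpha> 0) * \<phi> 0 \<le> (1 - \<alpha> 0) * D_X\<^sup>2" using alpha0 phiD by (intro mult_left_mono) auto
    have f2: "\<alpha> K * \<phi> (K - 1) \<le> \<alpha> K * D_X\<^sup>2" using alpha_nonneg phiD by (intro mult_left_mono) auto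
    have e1: "(1 - \<alpha> 0) * \<phi> 0 = \<phi> 0 - \<alpha> 0 * \<phi> 0" by algebra
    have e2: "(1 - \<alpha> 0) * D_X\<^sup>2 = D_X\<^sup>2 - \<alpha> 0 * D_X\<^sup>2" by algebra
    have e3: "(\<alpha> 0 - \<alpha> K) * D_X\<^sup>2 = \<alpha> 0 * D_X\<^sup>2 - \<alpha> K * D_X\<^sup>2" by algebra
    have e4: "(\<Sum>j<K. c j) = 2 * (\<Sum>j<K. lam j * (G (y j) \<bullet> (y j - u)))"
      unfolding c_def by (simp add: sum_distrib_left mult.assoc)
    show "2 * (\<Sum>j<K. lam j * (G (y j) \<bullet> (y j - u))) \<le> S"
    proof -
      have p: "(\<Sum>j<K. \<delta> j) \<le> suminf \<delta>" by (rule partial)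
      have q: "\<phi> K \<ge> 0" by (rule phi_nn)
      show ?thesis unfolding S_def using tel f1 f2 e1 e2 e3 e4 p q by argo
    qed
  qed
  have Q_closed: "closed Q"
  proof -
    have "Q = X \<inter> (\<Inter>v\<in>X. {z \<in> X. 0 \<le> F z \<bullet> (v - z)})" unfolding Qd VI_sol_def by auto
    moreover have "closed {z \<in> X. 0 \<le> F z \<bullet> (v - z)}" for v
      by (rule continuous_on_closed_Collect_le[OF continuous_on_const _ X_closed])
         (intro continuous_intros F_cont)
    ultimately show ?thesis using X_closed by (auto intro!: closed_Int closed_INT)
  qed
  show ?thesis
  proof (intro allI impI)
    fix K :: nat
    assume hK: "K \<ge> 1 \<and> int K \<ge> max \<lceil>(1 / \<epsilon>\<^sup>2) * (D0 * (D_X\<^sup>2 + suminf \<delta>) / lam_lo)\<rceil>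
                       \<lceil>(1 / \<epsilon>) * ((D_X\<^sup>2 + suminf \<delta>) / lam_lo)\<rceil>"
    have K1: "K \<ge> 1" using hK by simp
    have c1: "real K \<ge> (1 / \<epsilon>\<^sup>2) * (D0 * S / lam_lo)"
    proof -
      have "(1 / \<epsilon>\<^sup>2) * (D0 * S / lam_lo) \<le> of_int \<lceil>(1 / \<epsilon>\<^sup>2) * (D0 * S / lam_lo)\<rceil>" by (rule le_of_int_ceiling)
      also have "\<dots> \<le> of_int (int K)" using hK unfolding S_def by (intro of_int_le_iff[THEN iffD2]) simp
      finally show ?thesis by simp
    qed
    have c2: "real K \<ge> (1 / \<epsilon>) * (S / lam_lo)"
    proof -
      have "(1 / \<epsilon>) * (S / lam_lo) \<le> of_int \<lceil>(1 / \<epsilon>) * (S / lam_lo)\<rceil>" by (rule le_of_int_ceiling)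
      also have "\<dots> \<le> of_int (int K)" using hK unfolding S_def by (intro of_int_le_iff[THEN iffD2]) simp
      finally show ?thesis by simp
    qed
    define Lam where "Lam = (\<Sum>j<K. lam j)"
    have Lam_ge: "Lam \<ge> real K * lam_lo"
    proof -
      have "(\<Sum>j<K. lam_lo) \<le> Lam" unfolding Lam_def using lam_bounds by (intro sum_mono) auto
      thus ?thesis by simp
    qed
    have KL_pos: "real K * lam_lo > 0" using K1 lam_lo_pos by simp
    have Lam_pos: "Lam > 0" using Lam_ge KL_pos by linarith
    define R where "R = S / (real K * lam_lo)"
    have R_nn: "R \<ge> 0" unfolding R_def using S_nn KL_pos by simp
    have R_eps: "R \<le> \<epsilon>"
    proof -
      have "S / (\<epsilon> * lam_lo) \<le> real K" using c2 by simp
      hence "S \<le> real K * (\<epsilon> * lam_lo)" using eps_pos lam_lo_pos by (simp add: pos_divide_le_eq)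
      thus ?thesis unfolding R_def using KL_pos by (simp add: pos_divide_le_eq algebra_simps)
    qed
    have R_eps2: "D0 * R \<le> \<epsilon>\<^sup>2"
    proof -
      have "D0 * S / (\<epsilon>\<^sup>2 * lam_lo) \<le> real K" using c1 by simp
      hence "D0 * S \<le> real K * (\<epsilon>\<^sup>2 * lam_lo)" using eps_pos lam_lo_pos by (simp add: pos_divide_le_eq)
      thus ?thesis unfolding R_def using KL_pos by (simp add: pos_divide_le_eq algebra_simps)
    qed
    have yb: "ybar K = (\<Sum>j<K. ((1 / Lam) * lam j) *\<^sub>R y j)"
      unfolding ybar_def Lam_def by (simp add: scaleR_sum_right)
    have ybX: "ybar K \<in> X"
    proof -
      have "(\<Sum>j<K. (1 / Lam) * lam j) = 1" using Lam_pos unfolding Lam_def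
        by (simp add: sum_divide_distrib[symmetric])
      moreover have "\<And>j. (1 / Lam) * lam j \<ge> 0" using Lam_pos lam_pos by (simp add: less_imp_le)
      ultimately show ?thesis unfolding yb using X_convex yX by (intro convex_sum) auto
    qed
    have Gb: "\<And>u. u \<in> X \<Longrightarrow> G u \<bullet> (ybar K - u) \<le> R / 2"
    proof -
      fix u assume u: "u \<in> X"
      have "(\<Sum>j<K. lam j * (G u \<bullet> (y j - u))) \<le> (\<Sum>j<K. lam j * (G (y j) \<bullet> (y j - u)))"
        using mono[OF u yX] lam_pos by (intro sum_mono mult_left_mono) (auto simp: less_imp_le)
      also have "\<dots> \<le> S / 2" using key[OF u, of K] by simp
      finally have "Lam * (G u \<bullet> (ybar K - u)) \<le> S / 2"
        using avg[where K=K and lam=lam and g="G u" and y=y and u=u] Lam_pos unfolding ybar_def Lam_def by simp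
      hence "G u \<bullet> (ybar K - u) \<le> S / 2 / Lam" using Lam_pos by (simp add: pos_le_divide_eq mult.commute)
      also have "\<dots> \<le> S / 2 / (real K * lam_lo)"
        using S_nn Lam_ge KL_pos by (intro divide_left_mono) auto
      also have "\<dots> = R / 2" unfolding R_def by simp
      finally show "G u \<bullet> (ybar K - u) \<le> R / 2" .
    qed
    have CD: "C_H * D_X \<le> D0"
    proof -
      have "lam_lo * (C_H * D_X) \<le> lam_hi * (C_H * D_X)"
        using lam_lo_hi CH_nn DX_nn by (intro mult_right_mono) auto
      hence "C_H * D_X \<le> lam_hi * C_H * D_X / lam_lo"
        using lam_lo_pos by (simp add: pos_le_divide_eq mult.commute mult.left_commute)
      thus ?thesis using D0_ge by linarith
    qed
    have etaD: "\<eta> * D0 = \<epsilon> / 2" unfolding \<eta>_def using D0_pos by simp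
    have Fb: "\<And>u. u \<in> X \<Longrightarrow> F u \<bullet> (ybar K - u) \<le> \<epsilon>"
    proof -
      fix u assume u: "u \<in> X"
      have e: "F u \<bullet> (ybar K - u) = G u \<bullet> (ybar K - u) - \<eta> * (H u \<bullet> (ybar K - u))"
        unfolding G_def by (simp add: inner_add_left)
      have "- (H u \<bullet> (ybar K - u)) \<le> norm (H u) * norm (ybar K - u)"
        using Cauchy_Schwarz_ineq2[of "H u" "ybar K - u"] by linarith
      also have "\<dots> \<le> C_H * D_X" using CH[OF u] diam[OF ybX u] CH_nn by (intro mult_mono) auto
      finally have "- (H u \<bullet> (ybar K - u)) \<le> C_H * D_X" .
      hence "\<eta> * (- (H u \<bullet> (ybar K - u))) \<le> \<eta> * D0" using CD eta_pos
        by (meson less_imp_le mult_left_mono order_trans)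
      thus "F u \<bullet> (ybar K - u) \<le> \<epsilon>" using e Gb[OF u] R_eps etaD by simp
    qed
    have Hb: "\<And>u. u \<in> Q \<Longrightarrow> H u \<bullet> (ybar K - u) \<le> \<epsilon>"
    proof -
      fix u assume u: "u \<in> Q"
      have uX: "u \<in> X" using u QX by auto
      have f0: "F u \<bullet> (ybar K - u) \<ge> 0" using u ybX unfolding Qd VI_sol_def by auto
      have e: "G u \<bullet> (ybar K - u) = F u \<bullet> (ybar K - u) + \<eta> * (H u \<bullet> (ybar K - u))"
        unfolding G_def by (simp add: inner_add_left)
      have "\<eta> * (H u \<bullet> (ybar K - u)) \<le> R / 2" using e f0 Gb[OF uX] by linarith
      also have "R / 2 \<le> \<eta> * \<epsilon>"
      proof -
        have "\<eta> * \<epsilon> = \<epsilon>\<^sup>2 / (2 * D0)" unfolding \<eta>_def by (simp add: power2_eq_square)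
        moreover have "R / 2 \<le> \<epsilon>\<^sup>2 / (2 * D0)" using R_eps2 D0_pos
          by (simp add: pos_le_divide_eq mult.commute)
        ultimately show ?thesis by simp
      qed
      finally show "H u \<bullet> (ybar K - u) \<le> \<epsilon>" using eta_pos by simp
    qed
    have GF_le: "Gap (ybar K) F X \<le> \<epsilon>" by (rule Gap_le[OF X_ne Fb])
    have GF_ge: "0 \<le> Gap (ybar K) F X" using Gap_ge[OF ybX Fb] by simp
    have GH_le: "Gap (ybar K) H Q \<le> \<epsilon>" by (rule Gap_le[OF Q_ne' Hb])
    have GH_ge: "- B_H * infdist (ybar K) Q \<le> Gap (ybar K) H Q"
    proof -
      obtain q where q: "q \<in> Q" "infdist (ybar K) Q = dist (ybar K) q"
        using infdist_attains_inf[OF Q_closed Q_ne'] by blast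
      have "- B_H * infdist (ybar K) Q \<le> - norm (H q) * norm (ybar K - q)"
        using q BH[OF q(1)] by (simp add: dist_norm mult_right_mono)
      also have "\<dots> \<le> H q \<bullet> (ybar K - q)"
        using Cauchy_Schwarz_ineq2[of "H q" "ybar K - q"] by linarith
      also have "\<dots> \<le> Gap (ybar K) H Q" by (rule Gap_ge[OF q(1) Hb])
      finally show ?thesis .
    qed
    have WS: "\<forall>\<sigma> M. \<sigma> > 0 \<and> M \<ge> 1 \<and> weakly_sharp F X Q \<sigma> M \<longrightarrow>
               Gap (ybar K) H Q \<ge> - (B_H / \<sigma> powr (1 / M)) * \<epsilon> powr (1 / M)"
    proof (intro allI impI)
      fix \<sigma> M :: real
      assume h: "\<sigma> > 0 \<and> M \<ge> 1 \<and> weakly_sharp F X Q \<sigma> M"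
      obtain q0 where q0: "q0 \<in> Q" using Q_ne' by blast
      define d where "d = infdist (ybar K) Q"
      have d_nn: "d \<ge> 0" unfolding d_def by (rule infdist_nonneg)
      have "\<sigma> * d powr M \<le> F q0 \<bullet> (ybar K - q0)"
        using h q0 ybX unfolding weakly_sharp_def d_def by blast
      also have "\<dots> \<le> \<epsilon>" using Fb q0 QX by blast
      finally have "d powr M \<le> \<epsilon> / \<sigma>" using h by (simp add: pos_le_divide_eq mult.commute)
      hence "(d powr M) powr (1 / M) \<le> (\<epsilon> / \<sigma>) powr (1 / M)"
        using h by (intro powr_mono2) auto
      moreover have "(d powr M) powr (1 / M) = d"
      proof (cases "d = 0")
        case True thus ?thesis by simp
      next
        case False
        hence "d > 0" using d_nn by simp
        thus ?thesis using h by (simp add: powr_powr)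
      qed
      ultimately have dle: "d \<le> \<epsilon> powr (1 / M) / \<sigma> powr (1 / M)"
        using eps_pos h by (simp add: powr_divide)
      have "- (B_H / \<sigma> powr (1 / M)) * \<epsilon> powr (1 / M) = - B_H * (\<epsilon> powr (1 / M) / \<sigma> powr (1 / M))"
        by simp
      also have "\<dots> \<le> - B_H * d" using mult_left_mono[OF dle BH_nn] by simp
      also have "\<dots> \<le> Gap (ybar K) H Q" using GH_ge unfolding d_def .
      finally show "Gap (ybar K) H Q \<ge> - (B_H / \<sigma> powr (1 / M)) * \<epsilon> powr (1 / M)" .
    qed
    show "- B_H * infdist (ybar K) Q \<le> Gap (ybar K) H Q \<and> Gap (ybar K) H Q \<le> \<epsilon> \<and>
            0 \<le> Gap (ybar K) F X \<and> Gap (ybar K) F X \<le> \<epsilon> \<and>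
            (\<forall>\<sigma> M. \<sigma> > 0 \<and> M \<ge> 1 \<and> weakly_sharp F X Q \<sigma> M \<longrightarrow>
               Gap (ybar K) H Q \<ge> - (B_H / \<sigma> powr (1 / M)) * \<epsilon> powr (1 / M))"
      using GH_ge GH_le GF_ge GF_le WS by blast
  qed
qed

end
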